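(* Let $\tau_1,\tau_c,\tau_s>0$ with $\tau_1+\tau_c+\tau_s=1$ and $1\gg\tau_c/\tau_1>\tau_s/\tau_1>0$. Let $$\eta_uA^{(u)}=\begin{bmatrix}a&2\tau_1\tau_s&2\tau_1\tau_c&2\tau_c\tau_s&0&0\\2\tau_1\tau_s&a&2\tau_c\tau_s&2\tau_1\tau_c&0&0\\2\tau_1\tau_c&2\tau_c\tau_s&a&2\tau_1\tau_s&0&0\\2\tau_c\tau_s&2\tau_1\tau_c&2\tau_1\tau_s&a&0&0\\0&0&0&0&2\tau_1^2&2\tau_1^2\\0&0&0&0&2\tau_1^2&2\tau_1^2\end{bmatrix},\quad a=\tau_1^2+\tau_s^2+\tau_c^2,$$ let $D^{(u)}$ be the diagonal matrix of row sums of $\eta_uA^{(u)}$, and let $\lambda_1^{(u)}\ge\lambda_2^{(u)}\ge\lambda_3^{(u)}$ be the three largest eigenvalues of $D^{(u)-1/2}(\eta_uA^{(u)})D^{(u)-1/2}$ with eigenvectors $v_1^{(u)},v_2^{(u)},v_3^{(u)}$. Set $\hat\lambda_1^{(u)}=1,\ \hat\lambda_2^{(u)}=1,\ \hat\lambda_3^{(u)}=1-4\frac{\tau_s}{\tau_1}$ and $\hat v_1^{(u)}=[0,0,0,0,1,1]$, $\hat v_2^{(u)}=[1,1,1,1,0,0]$, $\hat v_3^{(u)}=[1,-1,1,-1,0,0]$. Then for $i\in\{1,2,3\}$, $|\lambda_i^{(u)}-\hat\lambda_i^{(u)}|\le O((\tau_c/\tau_1)^2)$, and $\|\sin(U^{(u)},\hat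 U^{(u)})\|_F\le O\big(\frac{\tau_c^2}{\tau_1(\tau_c-\tau_s)}\big)$, where $U^{(u)}=[v_1^{(u)},v_2^{(u)},v_3^{(u)}]$ and $\hat U^{(u)}=[\hat v_1^{(u)},\hat v_2^{(u)},\hat v_3^{(u)}]$.
   Context: $\sin(U,\hat U)$ denotes the matrix of sines of the principal angles between the column spaces of $U$ and $\hat U$ (subspace distance between matrices with orthonormalized columns). The $O(\cdot)$ bounds refer to the regime $\tau_c/\tau_1\to0$. *)

theory Defs
  imports "HOL-Analysis.Analysis"
begin

definition etaA :: "real \<Rightarrow> real \<Rightarrow> real \<Rightarrow> real^6^6" where
  "etaA t1 tc ts = (let a = t1^2 + ts^2 + tc^2 in
     vector [vector [a, 2*t1*ts, 2*t1*tc, 2*tc*ts, 0, 0],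
             vector [2*t1*ts, a, 2*tc*ts, 2*t1*tc, 0, 0],
             vector [2*t1*tc, 2*tc*ts, a, 2*t1*ts, 0, 0],
             vector [2*tc*ts, 2*t1*tc, 2*t1*ts, a, 0, 0],
             vector [0, 0, 0, 0, 2*t1^2, 2*t1^2],
             vector [0, 0, 0, 0, 2*t1^2, 2*t1^2]])"

definition diag_mat :: "real^'n \<Rightarrow> real^'n^'n" where
  "diag_mat d = (\<chi> i j. if i = j then d $ i else 0)"

definition norm_adj :: "real^'n^'n \<Rightarrow> real^'n^'n" where
  "norm_adj M = (let Dm = diag_mat (\<chi> i. 1 / sqrt (\<Sum>j\<in>UNIV. M $ i $ j)) in Dm ** M ** Dm)"

text \<open>Frobenius norm of sin(U, Uhat), where U has orthonormal columns us (a list of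
  vectors) and Uhat has columns uhs: the matrix of sines of principal angles is
  (I - P) U with P the orthogonal projector onto the column space of Uhat;
  its Frobenius norm is sqrt (sum_j |u_j - P u_j|^2).\<close>
definition sin_theta_fro :: "('a::euclidean_space) list \<Rightarrow> 'a list \<Rightarrow> real" where
  "sin_theta_fro us uhs =
     sqrt (\<Sum>u\<leftarrow>us. (norm (u - closest_point (span (set uhs)) u))^2)"

end

theory Submission
  imports Defs
begin

lemma exhaust_6:
  fixes x :: 6
  shows "x = 1 \<or> x = 2 \<or> x = 3 \<or> x = 4 \<or> x = 5 \<or> x = 6"
proof (induct x)
  case (of_int z)
  then have "z = 0 \<or> z = 1 \<or> z = 2 \<or> z = 3 \<or> z = 4 \<or> z = 5" by fastforce
  then show ?case by auto
qed

lemma UNIV_6: "UNIV = {1, 2, 3, 4, 5, 6::6}"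
  using exhaust_6 by auto

lemma sum_6: "sum f (UNIV::6 set) = f 1 + f 2 + f 3 + f 4 + f 5 + f 6"
  unfolding UNIV_6 by (simp add: ac_simps)

lemma forall_6: "(\<forall>i::6. P i) \<longleftrightarrow> P 1 \<and> P 2 \<and> P 3 \<and> P 4 \<and> P 5 \<and> P 6"
  by (metis exhaust_6)

lemma vector_6 [simp]:
 "(vector [x1,x2,x3,x4,x5,x6] ::('a::zero)^6)$1 = x1"
 "(vector [x1,x2,x3,x4,x5,x6] ::('a::zero)^6)$2 = x2"
 "(vector [x1,x2,x3,x4,x5,x6] ::('a::zero)^6)$3 = x3"
 "(vector [x1,x2,x3,x4,x5,x6] ::('a::zero)^6)$4 = x4"
 "(vector [x1,x2,x3,x4,x5,x6] ::('a::zero)^6)$5 = x5"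
 "(vector [x1,x2,x3,x4,x5,x6] ::('a::zero)^6)$6 = x6"
  unfolding vector_def by simp_all

lemma inner6: "(x::real^6) \<bullet> y = x$1*y$1 + x$2*y$2 + x$3*y$3 + x$4*y$4 + x$5*y$5 + x$6*y$6"
  by (simp add: inner_vec_def sum_6)

lemma diag_sandwich: "diag_mat d ** A ** diag_mat d = (\<chi> i j. d$i * A$i$j * d$j)"
  unfolding diag_mat_def matrix_matrix_mult_def
  by (simp add: vec_eq_iff mult.assoc sum_distrib_left[symmetric] if_distrib[where f="\<lambda>x. x * _"] if_distrib[where f="\<lambda>x. _ * x"] cong: if_cong)

lemma etaA_rowsum:
  assumes "t1 > 0" "t1 + tc + ts = 1"
  shows "(\<chi> i. 1 / sqrt (\<Sum>j\<in>UNIV. etaA t1 tc ts $ i $ j)) = (vector [1,1,1,1,1/(2*t1),1/(2*t1)] :: real^6)"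
proof -
  have r1: "(t1^2+ts^2+tc^2) + 2*t1*ts + 2*t1*tc + 2*tc*ts = 1"
  proof -
    have "(t1+tc+ts)^2 = (t1^2+ts^2+tc^2) + 2*t1*ts + 2*t1*tc + 2*tc*ts"
      by (simp add: power2_eq_square algebra_simps)
    then show ?thesis using assms(2) by simp
  qed
  have s: "sqrt (4*t1^2) = 2*t1" using assms(1)
    by (simp add: real_sqrt_mult)
  have s': "2 * t1\<^sup>2 + 2 * t1\<^sup>2 = 4*t1^2" by simp
  show ?thesis
    unfolding vec_eq_iff forall_6 using r1 s
    by (simp add: etaA_def Let_def sum_6 s' algebra_simps)
qed

lemma Mv:
  assumes "t1 > 0" "t1 + tc + ts = 1"
  shows "norm_adj (etaA t1 tc ts) *v x = vector [
    (t1^2+ts^2+tc^2)*x$1 + 2*t1*ts*x$2 + 2*t1*tc*x$3 + 2*tc*ts*x$4,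
    2*t1*ts*x$1 + (t1^2+ts^2+tc^2)*x$2 + 2*tc*ts*x$3 + 2*t1*tc*x$4,
    2*t1*tc*x$1 + 2*tc*ts*x$2 + (t1^2+ts^2+tc^2)*x$3 + 2*t1*ts*x$4,
    2*tc*ts*x$1 + 2*t1*tc*x$2 + 2*t1*ts*x$3 + (t1^2+ts^2+tc^2)*x$4,
    x$5/2 + x$6/2, x$5/2 + x$6/2]"
proof -
  have e: "1 / (2 * t1) * (2 * t1\<^sup>2) * (1 / (2 * t1)) = 1/2" using assms(1)
    by (simp add: power2_eq_square field_simps)
  show ?thesis
    unfolding norm_adj_def Let_def etaA_rowsum[OF assms] diag_sandwich
    unfolding vec_eq_iff forall_6 matrix_vector_mult_def
    using assms(1) by (simp add: sum_6 etaA_def Let_def e algebra_simps power2_eq_square)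
qed

lemma spanning6:
  fixes v :: "nat \<Rightarrow> real^6"
  assumes orth: "\<forall>i\<in>{1..6}. \<forall>j\<in>{1..6}. v i \<bullet> v j = (if i = j then 1 else 0)"
    and x: "\<forall>i\<in>{1..6}. x \<bullet> v i = 0"
  shows "x = 0"
proof -
  let ?S = "v ` {1..6}"
  have inj: "inj_on v {1..6}"
  proof (rule inj_onI)
    fix i j assume ij: "i \<in> {1..6}" "j \<in> {1..6}" "v i = v j"
    show "i = j"
    proof (rule ccontr)
      assume "i \<noteq> j"
      then have "v i \<bullet> v j = 0" using orth ij(1,2) by auto
      moreover have "v i \<bullet> v i = 1" using orth ij(1) by auto
      ultimately show False using ij by simp
    qed
  qed
  have card: "card ?S = 6" using card_image[OF inj] by simp
  have po: "pairwise orthogonal ?S"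
  proof (unfold pairwise_def orthogonal_def, intro ballI impI)
    fix a b assume ab: "a \<in> ?S" "b \<in> ?S" "a \<noteq> b"
    then obtain i j where "i \<in> {1..6}" "j \<in> {1..6}" "a = v i" "b = v j" by auto
    moreover have "i \<noteq> j" using ab calculation by auto
    ultimately show "a \<bullet> b = 0" using orth by auto
  qed
  have nz: "0 \<notin> ?S"
  proof
    assume "0 \<in> ?S"
    then obtain i where i: "i \<in> {1..6}" "v i = 0" by auto
    have "v i \<bullet> v i = 1" using orth i(1) by auto
    then show False using i by simp
  qed
  have ind: "independent ?S" by (rule pairwise_orthogonal_independent[OF po nz])
  have "UNIV \<subseteq> span ?S"
    using card_eq_dim[of ?S UNIV] ind card by simp
  then have "x \<in> span ?S" by auto
  moreover have "\<And>y. y \<in> ?S \<Longrightarrow> orthogonal x y" using x unfolding orthogonal_def by auto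
  ultimately have "orthogonal x x" using orthogonal_to_span by blast
  then show ?thesis by (simp add: orthogonal_self)
qed

lemma basis_zero:
  fixes x :: "real^6"
  assumes "x \<bullet> vector [0,0,0,0,1,1] = 0" "x \<bullet> vector [1,1,1,1,0,0] = 0"
    "x \<bullet> vector [1,-1,1,-1,0,0] = 0" "x \<bullet> vector [1,1,-1,-1,0,0] = 0"
    "x \<bullet> vector [1,-1,-1,1,0,0] = 0" "x \<bullet> vector [0,0,0,0,1,-1] = 0"
  shows "x = 0"
  using assms unfolding vec_eq_iff forall_6 inner6 by simp

lemma basis_12:
  fixes x :: "real^6"
  assumes 
    "x \<bullet> vector [1,-1,1,-1,0,0] = 0" "x \<bullet> vector [1,1,-1,-1,0,0] = 0"
    "x \<bullet> vector [1,-1,-1,1,0,0] = 0" "x \<bullet> vector [0,0,0,0,1,-1] = 0"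
  shows "x = (x$5) *\<^sub>R vector [0,0,0,0,1,1] + (x$1) *\<^sub>R vector [1,1,1,1,0,0]"
  using assms unfolding vec_eq_iff forall_6 inner6 by simp

lemma basis_3:
  fixes x :: "real^6"
  assumes "x \<bullet> vector [0,0,0,0,1,1] = 0" "x \<bullet> vector [1,1,1,1,0,0] = 0"
    "x \<bullet> vector [1,1,-1,-1,0,0] = 0"
    "x \<bullet> vector [1,-1,-1,1,0,0] = 0" "x \<bullet> vector [0,0,0,0,1,-1] = 0"
  shows "x = (x$1) *\<^sub>R vector [1,-1,1,-1,0,0]"
  using assms unfolding vec_eq_iff forall_6 inner6 by simp

lemma eig_w:
  assumes "t1 > 0" "t1 + tc + ts = 1"
  shows
   "vector [0,0,0,0,1,1] \<bullet> (norm_adj (etaA t1 tc ts) *v x) = 1 * (vector [0,0,0,0,1,1] \<bullet> x)"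
   "vector [1,1,1,1,0,0] \<bullet> (norm_adj (etaA t1 tc ts) *v x) = 1 * (vector [1,1,1,1,0,0] \<bullet> x)"
   "vector [1,-1,1,-1,0,0] \<bullet> (norm_adj (etaA t1 tc ts) *v x) = (t1+tc-ts)^2 * (vector [1,-1,1,-1,0,0] \<bullet> x)"
   "vector [1,1,-1,-1,0,0] \<bullet> (norm_adj (etaA t1 tc ts) *v x) = (t1+ts-tc)^2 * (vector [1,1,-1,-1,0,0] \<bullet> x)"
   "vector [1,-1,-1,1,0,0] \<bullet> (norm_adj (etaA t1 tc ts) *v x) = (t1-ts-tc)^2 * (vector [1,-1,-1,1,0,0] \<bullet> x)"
   "vector [0,0,0,0,1,-1] \<bullet> (norm_adj (etaA t1 tc ts) *v x) = 0 * (vector [0,0,0,0,1,-1] \<bullet> x)"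
proof -
  have r1: "(t1^2+ts^2+tc^2) + 2*t1*ts + 2*t1*tc + 2*tc*ts = 1"
  proof -
    have "(t1+tc+ts)^2 = (t1^2+ts^2+tc^2) + 2*t1*ts + 2*t1*tc + 2*tc*ts"
      by (simp add: power2_eq_square algebra_simps)
    then show ?thesis using assms(2) by simp
  qed
  have r1': "(t1^2+ts^2+tc^2) = 1 - (2*t1*ts + 2*t1*tc + 2*tc*ts)" using r1 by linarith
  show "vector [0,0,0,0,1,1] \<bullet> (norm_adj (etaA t1 tc ts) *v x) = 1 * (vector [0,0,0,0,1,1] \<bullet> x)"
    unfolding Mv[OF assms] inner6 by simp
  show "vector [1,1,1,1,0,0] \<bullet> (norm_adj (etaA t1 tc ts) *v x) = 1 * (vector [1,1,1,1,0,0] \<bullet> x)"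
    unfolding Mv[OF assms] inner6 r1' by (simp add: algebra_simps)
  show "vector [1,-1,1,-1,0,0] \<bullet> (norm_adj (etaA t1 tc ts) *v x) = (t1+tc-ts)^2 * (vector [1,-1,1,-1,0,0] \<bullet> x)"
    unfolding Mv[OF assms] inner6 by (simp add: algebra_simps power2_eq_square)
  show "vector [1,1,-1,-1,0,0] \<bullet> (norm_adj (etaA t1 tc ts) *v x) = (t1+ts-tc)^2 * (vector [1,1,-1,-1,0,0] \<bullet> x)"
    unfolding Mv[OF assms] inner6 by (simp add: algebra_simps power2_eq_square)
  show "vector [1,-1,-1,1,0,0] \<bullet> (norm_adj (etaA t1 tc ts) *v x) = (t1-ts-tc)^2 * (vector [1,-1,-1,1,0,0] \<bullet> x)"
    unfolding Mv[OF assms] inner6 by (simp add: algebra_simps power2_eq_square)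
  show "vector [0,0,0,0,1,-1] \<bullet> (norm_adj (etaA t1 tc ts) *v x) = 0 * (vector [0,0,0,0,1,-1] \<bullet> x)"
    unfolding Mv[OF assms] inner6 by simp
qed

lemma eig_rel:
  assumes "w \<bullet> (M *v x) = m * (w \<bullet> x)" "M *v x = l *\<^sub>R x"
  shows "l \<noteq> m \<Longrightarrow> w \<bullet> x = 0"
  using assms by (simp add: inner_commute)

lemma idx6: "(i::nat) \<in> {1..6} \<longleftrightarrow> i = 1 \<or> i = 2 \<or> i = 3 \<or> i = 4 \<or> i = 5 \<or> i = 6"
  by auto

lemma bound3:
  fixes t1 tc ts :: real
  assumes "t1 > 0" "tc > 0" "ts > 0" "t1 + tc + ts = 1" "ts < tc"
  shows "\<bar>(t1+tc-ts)^2 - (1 - 4 * (ts / t1))\<bar> \<le> 12 * (tc / t1)^2"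
proof -
  have t1le: "t1 \<le> 1" using assms by linarith
  have e: "t1+tc-ts = 1 - 2*ts" using assms(4) by linarith
  have d: "(t1+tc-ts)^2 - (1 - 4 * (ts / t1)) = 4*ts*(tc+ts)/t1 + 4*ts^2"
  proof -
    have "4 * (ts / t1) - 4*ts = 4*ts*(1-t1)/t1"
      using assms(1) by (simp add: field_simps)
    also have "1 - t1 = tc + ts" using assms(4) by linarith
    finally have "4 * (ts / t1) - 4*ts = 4*ts*(tc+ts)/t1" .
    then show ?thesis unfolding e by (simp add: power2_eq_square algebra_simps)
  qed
  have nn: "0 \<le> 4*ts*(tc+ts)/t1 + 4*ts^2" using assms by simp
  have a: "4*ts*(tc+ts)/t1 \<le> 8*tc^2/t1^2"
  proof -
    have "ts*tc \<le> tc*tc" using assms by (intro mult_right_mono) auto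
    moreover have "ts*ts \<le> tc*tc" using assms by (intro mult_mono) auto
    ultimately have "4*ts*(tc+ts) \<le> 8*tc^2" by (simp add: power2_eq_square algebra_simps)
    also have "8*tc^2 \<le> 8*tc^2/t1" using assms t1le
      by (simp add: divide_simps power2_eq_square mult_left_le)
    finally have "4*ts*(tc+ts) \<le> 8*tc^2/t1" .
    then have "4*ts*(tc+ts)/t1 \<le> 8*tc^2/t1/t1" by (rule divide_right_mono) (use assms(1) in simp)
    then show ?thesis by (simp add: power2_eq_square)
  qed
  have b: "4*ts^2 \<le> 4*tc^2/t1^2"
  proof -
    have "ts^2 \<le> tc^2" using assms by (simp add: power_mono)
    also have "tc^2 \<le> tc^2/t1^2" using assms t1le
      by (simp add: divide_simps power2_eq_square mult_le_one)
    finally show ?thesis by simp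
  qed
  have "\<bar>(t1+tc-ts)^2 - (1 - 4 * (ts / t1))\<bar> \<le> 12*tc^2/t1^2"
  proof -
    have t: "8*tc^2/t1^2 + 4*tc^2/t1^2 = 12*tc^2/t1^2"
      by (simp only: add_divide_distrib[symmetric]) simp
    show ?thesis unfolding d abs_of_nonneg[OF nn] using a b t by linarith
  qed
  then show ?thesis by (simp add: power_divide)
qed

lemma main7:
  fixes t1 tc ts :: real and lam :: "nat \<Rightarrow> real" and v :: "nat \<Rightarrow> real^6"
  assumes H: "t1 > 0" "tc > 0" "ts > 0" "t1 + tc + ts = 1" "ts < tc" "tc / t1 < 1/2"
    and E: "\<forall>i\<in>{1..6}. norm_adj (etaA t1 tc ts) *v v i = lam i *\<^sub>R v i"
    and O: "\<forall>i\<in>{1..6}. \<forall>j\<in>{1..6}. v i \<bullet> v j = (if i = j then 1 else 0)"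
    and S: "\<forall>i\<in>{1..5}. lam (Suc i) \<le> lam i"
  shows "(let lhat = (\<lambda>i::nat. if i = 3 then 1 - 4 * (ts / t1) else 1);
             vhat = [vector [0,0,0,0,1,1], vector [1,1,1,1,0,0], vector [1,-1,1,-1,0,0]]
                      :: (real^6) list
         in (\<forall>i\<in>{1..3}. \<bar>lam i - lhat i\<bar> \<le> 12 * (tc / t1)^2) \<and>
            sin_theta_fro [v 1, v 2, v 3] vhat \<le> 12 * (tc^2 / (t1 * (tc - ts))))"
proof -
  let ?M = "norm_adj (etaA t1 tc ts)"
  let ?w1 = "vector [0,0,0,0,1,1] :: real^6"
  let ?w2 = "vector [1,1,1,1,0,0] :: real^6"
  let ?w3 = "vector [1,-1,1,-1,0,0] :: real^6"
  let ?w4 = "vector [1,1,-1,-1,0,0] :: real^6"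
  let ?w5 = "vector [1,-1,-1,1,0,0] :: real^6"
  let ?w6 = "vector [0,0,0,0,1,-1] :: real^6"
  define m3 where "m3 = (t1+tc-ts)^2"
  define m4 where "m4 = (t1+ts-tc)^2"
  define m5 where "m5 = (t1-ts-tc)^2"
  have Hp: "t1 > 0" "t1 + tc + ts = 1" using H by auto
  have ev: "\<And>i. i \<in> {1..6} \<Longrightarrow> ?M *v v i = lam i *\<^sub>R v i" using E by auto
  have o1: "\<And>i. i \<in> {1..6} \<Longrightarrow> lam i \<noteq> 1 \<Longrightarrow> ?w1 \<bullet> v i = 0"
    by (rule eig_rel[OF eig_w(1)[OF Hp] ev])
  have o2: "\<And>i. i \<in> {1..6} \<Longrightarrow> lam i \<noteq> 1 \<Longrightarrow> ?w2 \<bullet> v i = 0"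
    by (rule eig_rel[OF eig_w(2)[OF Hp] ev])
  have o3: "\<And>i. i \<in> {1..6} \<Longrightarrow> lam i \<noteq> m3 \<Longrightarrow> ?w3 \<bullet> v i = 0"
    unfolding m3_def by (rule eig_rel[OF eig_w(3)[OF Hp] ev])
  have o4: "\<And>i. i \<in> {1..6} \<Longrightarrow> lam i \<noteq> m4 \<Longrightarrow> ?w4 \<bullet> v i = 0"
    unfolding m4_def by (rule eig_rel[OF eig_w(4)[OF Hp] ev])
  have o5: "\<And>i. i \<in> {1..6} \<Longrightarrow> lam i \<noteq> m5 \<Longrightarrow> ?w5 \<bullet> v i = 0"
    unfolding m5_def by (rule eig_rel[OF eig_w(5)[OF Hp] ev])
  have o6: "\<And>i. i \<in> {1..6} \<Longrightarrow> lam i \<noteq> 0 \<Longrightarrow> ?w6 \<bullet> v i = 0"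
    by (rule eig_rel[OF eig_w(6)[OF Hp] ev])
  have tc2: "tc < t1/2" using H by (simp add: divide_simps)
  have p5: "0 < t1-ts-tc" using tc2 H by linarith
  have m5p: "0 < m5" unfolding m5_def using p5 by simp
  have m45: "m5 < m4" unfolding m4_def m5_def
    by (rule power_strict_mono) (use H tc2 in auto)
  have m34: "m4 < m3" unfolding m4_def m3_def
    by (rule power_strict_mono) (use H tc2 in auto)
  have m31: "m3 < 1" unfolding m3_def
  proof -
    have "t1+tc-ts < 1" "0 \<le> t1+tc-ts" using H tc2 by linarith+
    then show "(t1+tc-ts)^2 < 1" by (simp add: power_less_one_iff abs_less_iff)
  qed
  have nz: "\<And>i. i \<in> {1..6} \<Longrightarrow> v i \<bullet> v i = 1" using O by auto
  have vals: "\<And>i. i \<in> {1..6} \<Longrightarrow> lam i = 1 \<or> lam i = m3 \<or> lam i = m4 \<or> lam i = m5 \<or> lam i = 0"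
  proof (rule ccontr)
    fix i assume i: "i \<in> {1..6}" and c: "\<not> (lam i = 1 \<or> lam i = m3 \<or> lam i = m4 \<or> lam i = m5 \<or> lam i = 0)"
    have "v i = 0"
      by (rule basis_zero) (use o1[OF i] o2[OF i] o3[OF i] o4[OF i] o5[OF i] o6[OF i] c in \<open>simp_all add: inner_commute\<close>)
    then show False using nz[OF i] by simp
  qed
  have le1: "\<And>i. i \<in> {1..6} \<Longrightarrow> lam i \<le> 1"
    using vals m5p m45 m34 m31 by fastforce
  have s1: "lam 2 \<le> lam 1" "lam 3 \<le> lam 2" "lam 4 \<le> lam 3" "lam 5 \<le> lam 4" "lam 6 \<le> lam 5"
    using S by (auto simp: numeral_eq_Suc)
  have exw: "\<exists>j\<in>{1..6}. w \<bullet> v j \<noteq> 0" if "w \<noteq> 0" for w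
  proof (rule ccontr)
    assume "\<not> ?thesis"
    then have "w = 0" by (intro spanning6[OF O]) auto
    then show False using that by simp
  qed
  have ne3: "?w3 \<noteq> 0" "?w4 \<noteq> 0" "?w5 \<noteq> 0" "?w6 \<noteq> 0" "?w1 \<noteq> 0"
    by (auto simp: vec_eq_iff forall_6)
  obtain j3 where j3: "j3 \<in> {1..6}" "lam j3 = m3" using exw[OF ne3(1)] o3 by blast
  obtain j4 where j4: "j4 \<in> {1..6}" "lam j4 = m4" using exw[OF ne3(2)] o4 by blast
  obtain j5 where j5: "j5 \<in> {1..6}" "lam j5 = m5" using exw[OF ne3(3)] o5 by blast
  obtain j6 where j6: "j6 \<in> {1..6}" "lam j6 = 0" using exw[OF ne3(4)] o6 by blast
  have l2: "lam 2 = 1"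
  proof (rule ccontr)
    assume c: "lam 2 \<noteq> 1"
    then have "lam 2 < 1" using le1[of 2] by simp
    have lt: "lam k < 1" if "k \<in> {2..6}" for k
    proof -
      have "k=2 \<or> k=3 \<or> k=4 \<or> k=5 \<or> k=6" using that by auto
      then show ?thesis using s1 \<open>lam 2 < 1\<close> by (elim disjE) auto
    qed
    define a where "a = ?w1 \<bullet> v 1"
    define b where "b = ?w2 \<bullet> v 1"
    have z: "\<forall>i\<in>{1..6}. (b *\<^sub>R ?w1 - a *\<^sub>R ?w2) \<bullet> v i = 0"
    proof
      fix i :: nat assume i: "i \<in> {1..6}"
      show "(b *\<^sub>R ?w1 - a *\<^sub>R ?w2) \<bullet> v i = 0"
      proof (cases "i = 1")
        case True
        then show ?thesis by (simp add: inner_diff_left a_def b_def)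
      next
        case False
        then have "i \<in> {2..6}" using i by auto
        then have "lam i \<noteq> 1" using lt by fastforce
        then show ?thesis using o1[OF i] o2[OF i] by (simp add: inner_diff_left)
      qed
    qed
    have "b *\<^sub>R ?w1 - a *\<^sub>R ?w2 = 0" by (rule spanning6[OF O z])
    then have "(b *\<^sub>R ?w1 - a *\<^sub>R ?w2) $ 5 = 0" "(b *\<^sub>R ?w1 - a *\<^sub>R ?w2) $ 1 = 0" by simp_all
    then have ab: "a = 0" "b = 0" by simp_all
    have "\<forall>i\<in>{1..6}. ?w1 \<bullet> v i = 0"
    proof
      fix i :: nat assume i: "i \<in> {1..6}"
      show "?w1 \<bullet> v i = 0"
      proof (cases "i = 1")
        case True
        then show ?thesis using ab a_def by simp
      next
        case False
        then have "i \<in> {2..6}" using i by auto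
        then have "lam i \<noteq> 1" using lt by fastforce
        then show ?thesis using o1[OF i] by simp
      qed
    qed
    then have "?w1 = 0" by (rule spanning6[OF O])
    then show False using ne3(5) by simp
  qed
  have l1: "lam 1 = 1" using le1[of 1] s1(1) l2 by simp
  have d: "m3 \<noteq> 1" "m4 \<noteq> 1" "m5 \<noteq> 1" "m3 \<noteq> m4" "m3 \<noteq> m5" "m4 \<noteq> m5" "m3 \<noteq> 0" "m4 \<noteq> 0" "m5 \<noteq> 0"
    using m5p m45 m34 m31 by auto
  have l3: "lam 3 = m3"
  proof -
    have "lam 3 = 1 \<or> lam 3 = m3 \<or> lam 3 = m4 \<or> lam 3 = m5 \<or> lam 3 = 0" using vals[of 3] by simp
    moreover have "lam 3 \<noteq> 1"
    proof
      assume l3: "lam 3 = 1"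
      have g4: "j \<in> {4..6}" if "j \<in> {1..6}" "lam j \<noteq> 1" for j
      proof -
        have "j=1 \<or> j=2 \<or> j=3 \<or> j=4 \<or> j=5 \<or> j=6" using that(1) by auto
        then show ?thesis using that(2) l1 l2 l3 by (elim disjE) auto
      qed
      have "j3 \<in> {4..6}" using g4[OF j3(1)] j3(2) d(1) by simp
      moreover have "j4 \<in> {4..6}" using g4[OF j4(1)] j4(2) d(2) by simp
      moreover have "j5 \<in> {4..6}" using g4[OF j5(1)] j5(2) d(3) by simp
      moreover have "j6 \<in> {4..6}" using g4[OF j6(1)] j6(2) by simp
      moreover have "j3 \<noteq> j4" "j3 \<noteq> j5" "j3 \<noteq> j6" "j4 \<noteq> j5" "j4 \<noteq> j6" "j5 \<noteq> j6"
        using j3(2) j4(2) j5(2) j6(2) d by auto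
      ultimately show False unfolding atLeastAtMost_iff by presburger
    qed
    moreover have "\<not> lam 3 < m3"
    proof
      assume c: "lam 3 < m3"
      have "j3 = 1 \<or> j3 = 2 \<or> j3 = 3 \<or> j3 = 4 \<or> j3 = 5 \<or> j3 = 6" using j3 by auto
      then show False using c s1 j3 l1 l2 d by (elim disjE) auto
    qed
    ultimately show ?thesis using m5p m45 m34 by auto
  qed
  have ex1: "v 1 \<in> span (set [?w1, ?w2, ?w3])"
  proof -
    have i: "(1::nat) \<in> {1..6}" by simp
    have e: "v 1 = (v 1 $ 5) *\<^sub>R ?w1 + (v 1 $ 1) *\<^sub>R ?w2"
      by (rule basis_12) (use o3[OF i] o4[OF i] o5[OF i] o6[OF i] l1 d in \<open>simp_all add: inner_commute\<close>)
    have "(v 1 $ 5) *\<^sub>R ?w1 + (v 1 $ 1) *\<^sub>R ?w2 \<in> span (set [?w1, ?w2, ?w3])"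
      by (intro span_add span_scale span_base) simp_all
    then show ?thesis by (simp only: e[symmetric])
  qed
  have ex2: "v 2 \<in> span (set [?w1, ?w2, ?w3])"
  proof -
    have i: "(2::nat) \<in> {1..6}" by simp
    have e: "v 2 = (v 2 $ 5) *\<^sub>R ?w1 + (v 2 $ 1) *\<^sub>R ?w2"
      by (rule basis_12) (use o3[OF i] o4[OF i] o5[OF i] o6[OF i] l2 d in \<open>simp_all add: inner_commute\<close>)
    have "(v 2 $ 5) *\<^sub>R ?w1 + (v 2 $ 1) *\<^sub>R ?w2 \<in> span (set [?w1, ?w2, ?w3])"
      by (intro span_add span_scale span_base) simp_all
    then show ?thesis by (simp only: e[symmetric])
  qed
  have ex3: "v 3 \<in> span (set [?w1, ?w2, ?w3])"
  proof -
    have i: "(3::nat) \<in> {1..6}" by simp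
    have e: "v 3 = (v 3 $ 1) *\<^sub>R ?w3"
      by (rule basis_3) (use o1[OF i] o2[OF i] o4[OF i] o5[OF i] o6[OF i] l3 d in \<open>simp_all add: inner_commute\<close>)
    have "(v 3 $ 1) *\<^sub>R ?w3 \<in> span (set [?w1, ?w2, ?w3])"
      by (intro span_scale span_base) simp
    then show ?thesis by (simp only: e[symmetric])
  qed
  have sin0: "sin_theta_fro [v 1, v 2, v 3] [?w1, ?w2, ?w3] = 0"
    unfolding sin_theta_fro_def
    using closest_point_self[OF ex1] closest_point_self[OF ex2] closest_point_self[OF ex3] by simp
  have pos: "0 \<le> 12 * (tc^2 / (t1 * (tc - ts)))" using H by simp
  have b3: "\<bar>m3 - (1 - 4 * (ts / t1))\<bar> \<le> 12 * (tc / t1)^2"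
    unfolding m3_def by (rule bound3) (use H in auto)
  have bi: "\<forall>i\<in>{1..3}. \<bar>lam i - (if i = 3 then 1 - 4 * (ts / t1) else 1)\<bar> \<le> 12 * (tc / t1)^2"
  proof
    fix i :: nat assume "i \<in> {1..3}"
    then have "i = 1 \<or> i = 2 \<or> i = 3" by auto
    then show "\<bar>lam i - (if i = 3 then 1 - 4 * (ts / t1) else 1)\<bar> \<le> 12 * (tc / t1)^2"
      using l1 l2 l3 b3 by (elim disjE) auto
  qed
  show ?thesis unfolding Let_def
  proof (rule conjI)
    show "sin_theta_fro [v 1, v 2, v 3] [?w1, ?w2, ?w3] \<le> 12 * (tc^2 / (t1 * (tc - ts)))"
      using sin0 pos by linarith
  qed (rule bi)
qed

theorem theorem7:
  "\<exists>C>0. \<exists>\<delta>>0. \<forall>t1 tc ts :: real.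
     t1 > 0 \<and> tc > 0 \<and> ts > 0 \<and> t1 + tc + ts = 1 \<and> ts < tc \<and> tc / t1 < \<delta> \<longrightarrow>
     (\<forall>(lam :: nat \<Rightarrow> real) (v :: nat \<Rightarrow> real^6).
        (\<forall>i\<in>{1..6}. norm_adj (etaA t1 tc ts) *v v i = lam i *\<^sub>R v i) \<and>
        (\<forall>i\<in>{1..6}. \<forall>j\<in>{1..6}. v i \<bullet> v j = (if i = j then 1 else 0)) \<and>
        (\<forall>i\<in>{1..5}. lam (Suc i) \<le> lam i)
        \<longrightarrow>
        (let lhat = (\<lambda>i::nat. if i = 3 then 1 - 4 * (ts / t1) else 1);
             vhat = [vector [0,0,0,0,1,1], vector [1,1,1,1,0,0], vector [1,-1,1,-1,0,0]]
                      :: (real^6) list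
         in (\<forall>i\<in>{1..3}. \<bar>lam i - lhat i\<bar> \<le> C * (tc / t1)^2) \<and>
            sin_theta_fro [v 1, v 2, v 3] vhat \<le> C * (tc^2 / (t1 * (tc - ts)))))"
proof -
  show ?thesis
    apply (rule exI[of _ "12::real"], rule conjI, simp)
    apply (rule exI[of _ "1/2::real"], rule conjI, simp)
    using main7 by blast
qed

end
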